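(* The quantum group $\mathbb{G}=\widehat{S_3}$ does not admit any central quantum Cayley graph $A$ such that $\mathbb{G}=\operatorname{Qut}(C(\mathbb{G}),A)$; that is, for no central orthogonal projection $P\in\mathbb{C}[S_3]$ does the quantum Cayley graph $A=P\star(\cdot)$ satisfy $\operatorname{Qut}(C(\mathbb{G}),A)=\mathbb{G}$.
   Context: $\widehat{S_3}$ is the finite quantum group with $C(\widehat{S_3})=\mathbb{C}[S_3]$, $\Delta(\lambda_g)=\lambda_g\otimes\lambda_g$, $S(\lambda_g)=\lambda_{g^{-1}}$; $\psi$ is its Haar functional normalized to be the tracial 1-form (tracial positive functional with $mm^*=\mathrm{id}$ for $\langle x,y\rangle=\psi(x^*y)$). Convolution: $x\star y=(\psi(S(x)\,\cdot)\otimes\mathrm{id})\Delta(y)$. For a quantum adjacency matrix $A$ (with $A\bullet A=A=\bar A$, $A\bullet B=m(A\otimes B)m^*$, $\bar Af=(A(f^* ))^*$), $\operatorname{Qut}(C(\mathbb{G}),A)$ is the universal compact quantum group with a $\psi$-preserving action $\alpha$ on $C(\mathbb{G})$ satisfying $(A\otimes\mathrm{id})\alpha=\alpha A$; $\mathbb{G}$ acts on it via $\Delta$, and equality means that the induced surjection of Hopf $*$-algebras is an isomorphism. *)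

theory Defs
  imports Complex_Main "HOL-Library.Numeral_Type" "HOL-Combinatorics.Perm"
begin

text \<open>S3 is the group of permutations of the three-element type 3.
  An element x of C[S3] is given by its coefficient function, x = sum_g (x g) lambda_g.\<close>

type_synonym grp = "3 perm"
type_synonym gal = "grp \<Rightarrow> complex"

definition lam :: "grp \<Rightarrow> gal" where
  "lam g = (\<lambda>h. if h = g then 1 else 0)"

definition gmult :: "gal \<Rightarrow> gal \<Rightarrow> gal" where
  "gmult x y = (\<lambda>k. \<Sum>g\<in>UNIV. \<Sum>h\<in>UNIV. if g * h = k then x g * y h else 0)"

definition gstar :: "gal \<Rightarrow> gal" where
  "gstar x = (\<lambda>g. cnj (x (inverse g)))"

definition antipode :: "gal \<Rightarrow> gal" where
  "antipode x = (\<lambda>g. x (inverse g))"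

text \<open>comultiplication Delta(lambda_g) = lambda_g (x) lambda_g; elements of C[S3] (x) C[S3]
  are coefficient functions on grp \<times> grp.\<close>
definition comult :: "gal \<Rightarrow> (grp \<times> grp \<Rightarrow> complex)" where
  "comult x = (\<lambda>(g, h). if g = h then x g else 0)"

text \<open>Haar functional normalised as the tracial delta-form (m m^* = id): psi(lambda_g) = 6 [g = 1].\<close>
definition psi :: "gal \<Rightarrow> complex" where
  "psi x = 6 * x 1"

text \<open>convolution x \<star> y = (psi(S(x) .) (x) id) Delta(y)\<close>
definition conv :: "gal \<Rightarrow> gal \<Rightarrow> gal" where
  "conv x y = (\<lambda>h. \<Sum>g\<in>UNIV. psi (gmult (antipode x) (lam g)) * comult y (g, h))"

definition central_orth_proj :: "gal \<Rightarrow> bool" where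
  "central_orth_proj P \<longleftrightarrow> gstar P = P \<and> gmult P P = P \<and> (\<forall>x. gmult P x = gmult x P)"

definition cayley :: "gal \<Rightarrow> (gal \<Rightarrow> gal)" where
  "cayley P = conv P"

datatype expr = U grp grp | C complex | Plus expr expr | Times expr expr | Star expr

text \<open>the smallest congruence making expr/eqv R a unital complex *-algebra in which R holds\<close>
inductive eqv :: "(expr \<Rightarrow> expr \<Rightarrow> bool) \<Rightarrow> expr \<Rightarrow> expr \<Rightarrow> bool" for R where
  rel: "R a b \<Longrightarrow> eqv R a b"
| refl: "eqv R a a"
| sym: "eqv R a b \<Longrightarrow> eqv R b a"
| trans: "eqv R a b \<Longrightarrow> eqv R b c \<Longrightarrow> eqv R a c"
| cong_plus: "eqv R a a' \<Longrightarrow> eqv R b b' \<Longrightarrow> eqv R (Plus a b) (Plus a' b')"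
| cong_times: "eqv R a a' \<Longrightarrow> eqv R b b' \<Longrightarrow> eqv R (Times a b) (Times a' b')"
| cong_star: "eqv R a a' \<Longrightarrow> eqv R (Star a) (Star a')"
| plus_assoc: "eqv R (Plus (Plus a b) c) (Plus a (Plus b c))"
| plus_comm: "eqv R (Plus a b) (Plus b a)"
| plus_zero: "eqv R (Plus a (C 0)) a"
| times_assoc: "eqv R (Times (Times a b) c) (Times a (Times b c))"
| times_one_left: "eqv R (Times (C 1) a) a"
| times_one_right: "eqv R (Times a (C 1)) a"
| times_zero: "eqv R (Times (C 0) a) (C 0)"
| distrib_left: "eqv R (Times a (Plus b c)) (Plus (Times a b) (Times a c))"
| distrib_right: "eqv R (Times (Plus a b) c) (Plus (Times a c) (Times b c))"
| const_plus: "eqv R (Plus (C x) (C y)) (C (x + y))"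
| const_times: "eqv R (Times (C x) (C y)) (C (x * y))"
| const_central: "eqv R (Times (C x) a) (Times a (C x))"
| star_plus: "eqv R (Star (Plus a b)) (Plus (Star a) (Star b))"
| star_times: "eqv R (Star (Times a b)) (Times (Star b) (Star a))"
| star_const: "eqv R (Star (C x)) (C (cnj x))"
| star_star: "eqv R (Star (Star a)) a"

definition grps :: "grp list" where
  "grps = (SOME xs. distinct xs \<and> set xs = UNIV)"

definition esum :: "(grp \<Rightarrow> expr) \<Rightarrow> expr" where
  "esum f = foldr (\<lambda>g e. Plus (f g) e) grps (C 0)"

definition kron :: "grp \<Rightarrow> grp \<Rightarrow> expr" where
  "kron i j = (if i = j then C 1 else C 0)"

text \<open>Elements of C[S3] (x) O are coefficient functions grp \<Rightarrow> expr (coefficient of lambda_g).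
  The action: alpha(lambda_i) = sum_j lambda_j (x) u_ji.\<close>
definition alpha :: "gal \<Rightarrow> grp \<Rightarrow> expr" where
  "alpha x = (\<lambda>j. esum (\<lambda>i. Times (C (x i)) (U j i)))"

definition tmult :: "(grp \<Rightarrow> expr) \<Rightarrow> (grp \<Rightarrow> expr) \<Rightarrow> grp \<Rightarrow> expr" where
  "tmult F G = (\<lambda>k. esum (\<lambda>g. esum (\<lambda>h. if g * h = k then Times (F g) (G h) else C 0)))"

definition tstar :: "(grp \<Rightarrow> expr) \<Rightarrow> grp \<Rightarrow> expr" where
  "tstar F = (\<lambda>g. Star (F (inverse g)))"

definition tunit :: "grp \<Rightarrow> expr" where
  "tunit = (\<lambda>g. if g = 1 then C 1 else C 0)"

text \<open>(T (x) id) applied to an element of C[S3] (x) O, for a linear map T on C[S3]\<close>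
definition tmap :: "(gal \<Rightarrow> gal) \<Rightarrow> (grp \<Rightarrow> expr) \<Rightarrow> grp \<Rightarrow> expr" where
  "tmap T F = (\<lambda>k. esum (\<lambda>g. Times (C (T (lam g) k)) (F g)))"

definition tpsi :: "(grp \<Rightarrow> expr) \<Rightarrow> expr" where
  "tpsi F = esum (\<lambda>g. Times (C (psi (lam g))) (F g))"

text \<open>Defining relations of Qut(C(G), A): u unitary (the basis lambda_g/sqrt 6 is orthonormal
  for <x,y> = psi(x^* y)), alpha a unital *-homomorphism, psi-preserving, and
  (A (x) id) alpha = alpha A.\<close>
inductive qut_rel :: "(gal \<Rightarrow> gal) \<Rightarrow> expr \<Rightarrow> expr \<Rightarrow> bool" for A where
  unitary1: "qut_rel A (esum (\<lambda>k. Times (Star (U k i)) (U k j))) (kron i j)"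
| unitary2: "qut_rel A (esum (\<lambda>k. Times (U i k) (Star (U j k)))) (kron i j)"
| mult: "qut_rel A (alpha (gmult x y) k) (tmult (alpha x) (alpha y) k)"
| star: "qut_rel A (alpha (gstar x) k) (tstar (alpha x) k)"
| unit: "qut_rel A (alpha (lam 1) k) (tunit k)"
| psi_pres: "qut_rel A (tpsi (alpha x)) (C (psi x))"
| adj: "qut_rel A (tmap A (alpha x) k) (alpha (A x) k)"

text \<open>The surjection O(Qut) \<rightarrow> C[S3] induced by the action Delta of G on C(G):
  Delta(lambda_i) = lambda_i (x) lambda_i, i.e. u_ji \<mapsto> [j = i] lambda_i.\<close>
fun evalG :: "expr \<Rightarrow> gal" where
  "evalG (U j i) = (if j = i then lam i else (\<lambda>_. 0))"
| "evalG (C c) = (\<lambda>g. if g = 1 then c else 0)"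
| "evalG (Plus a b) = (\<lambda>g. evalG a g + evalG b g)"
| "evalG (Times a b) = gmult (evalG a) (evalG b)"
| "evalG (Star a) = gstar (evalG a)"

text \<open>G = Qut(C(G), A): the induced map O(Qut) = expr/eqv \<rightarrow> C[S3] is well defined and bijective
  (it is surjective by construction), i.e. its kernel is exactly the relation ideal.\<close>
definition qut_equals_G :: "(gal \<Rightarrow> gal) \<Rightarrow> bool" where
  "qut_equals_G A \<longleftrightarrow> (\<forall>a b. eqv (qut_rel A) a b \<longleftrightarrow> evalG a = evalG b)"

end

theory Submission
  imports Defs
begin

lemma fin_grp: "finite (UNIV :: grp set)"
proof -
  have "inj (Perm.apply :: grp \<Rightarrow> (3 \<Rightarrow> 3))" by (simp add: inj_def apply_inject)
  moreover have "finite (range (Perm.apply :: grp \<Rightarrow> (3 \<Rightarrow> 3)))" by simp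
  ultimately show ?thesis using finite_imageD by blast
qed

lemma grps_prop: "distinct grps \<and> set grps = UNIV"
proof -
  obtain xs :: "grp list" where "distinct xs \<and> set xs = UNIV"
    using finite_distinct_list[OF fin_grp] by metis
  then show ?thesis unfolding grps_def by (rule someI)
qed

definition phi :: "grp \<Rightarrow> grp" where
  "phi g = Perm.swap 0 1 * g * Perm.swap 0 1"

fun chi :: "expr \<Rightarrow> complex" where
  "chi (U j i) = (if j = phi i then 1 else 0)"
| "chi (C c) = c"
| "chi (Plus a b) = chi a + chi b"
| "chi (Times a b) = chi a * chi b"
| "chi (Star a) = cnj (chi a)"

lemma chi_foldr: "chi (foldr (\<lambda>g e. Plus (f g) e) xs (C 0)) = sum_list (map (\<lambda>g. chi (f g)) xs)"
  by (induction xs) auto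

lemma chi_esum: "chi (esum f) = (\<Sum>g\<in>UNIV. chi (f g))"
  unfolding esum_def chi_foldr using grps_prop
  by (metis sum_list_distinct_conv_sum_set)

lemma chi_if: "chi (if c then a else b) = (if c then chi a else chi b)"
  by simp

lemma chi_U: "chi (U j i) = (if j = phi i then 1 else 0)"
  by simp

lemma phi_phi[simp]: "phi (phi g) = g"
  unfolding phi_def by (simp add: mult.assoc flip: mult.assoc[of "Perm.swap 0 1" "Perm.swap 0 1"])

lemma phi_eq_iff: "(j = phi i) = (i = phi j)"
  by (metis phi_phi)

lemma phi_inj: "(phi a = phi b) = (a = b)"
  by (metis phi_phi)

lemma phi_mult: "phi (g * h) = phi g * phi h"
  unfolding phi_def
  by (simp add: mult.assoc flip: mult.assoc[of "Perm.swap 0 1" "Perm.swap 0 1"])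

lemma phi_one[simp]: "phi 1 = 1"
  unfolding phi_def by simp

lemma phi_inverse: "phi (inverse g) = inverse (phi g)"
  unfolding phi_def by (simp add: mult.assoc)

lemma sum_phi: "(\<Sum>g\<in>UNIV. F (phi g)) = (\<Sum>g\<in>(UNIV::grp set). F g)"
proof -
  have "inj phi" by (metis injI phi_phi)
  moreover have "range phi = UNIV" by (metis surjI phi_phi)
  ultimately show ?thesis by (metis sum.reindex o_apply sum.cong)
qed

lemma mult_eq_iff1: "((a::grp) * g = k) = (a = k * inverse g)"
  by (metis mult.assoc mult_1_right perm.right_inverse perm.left_inverse)

lemma gmult_lam: "gmult x (lam g) k = x (k * inverse g)"
proof -
  have "gmult x (lam g) k = (\<Sum>a\<in>UNIV. \<Sum>b\<in>UNIV. if b = g then (if a * g = k then x a else 0) else 0)"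
    unfolding gmult_def lam_def by (intro sum.cong HOL.refl) auto
  also have "\<dots> = (\<Sum>a\<in>UNIV. if a = k * inverse g then x a else 0)"
    using fin_grp by (simp add: mult_eq_iff1)
  also have "\<dots> = x (k * inverse g)" using fin_grp by simp
  finally show ?thesis .
qed

lemma mult_eq_iff2: "((g::grp) * b = k) = (b = inverse g * k)"
  by (metis mult.assoc mult_1_left perm.right_inverse perm.left_inverse)

lemma lam_gmult: "gmult (lam g) x k = x (inverse g * k)"
proof -
  have "gmult (lam g) x k = (\<Sum>a\<in>UNIV. if a = g then (\<Sum>b\<in>UNIV. if b = inverse g * k then x b else 0) else 0)"
    unfolding gmult_def lam_def
    apply (rule sum.cong[OF HOL.refl])
    subgoal for a using fin_grp by (cases "a = g") (simp_all add: mult_eq_iff2)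
    done
  also have "\<dots> = x (inverse g * k)" using fin_grp by simp
  finally show ?thesis .
qed

lemma class_fun:
  assumes "\<forall>x. gmult P x = gmult x P"
  shows "P (phi m) = P m"
proof -
  have "gmult P (lam (Perm.swap 0 1)) (Perm.swap 0 1 * m) = gmult (lam (Perm.swap 0 1)) P (Perm.swap 0 1 * m)"
    using assms by simp
  then show ?thesis unfolding gmult_lam lam_gmult phi_def
    by (simp flip: mult.assoc)
qed

lemma cayley_eq: "cayley P y h = 6 * P h * y h"
proof -
  have "cayley P y h = (\<Sum>g\<in>UNIV. if g = h then psi (gmult (antipode P) (lam g)) * y h else 0)"
    unfolding cayley_def conv_def comult_def by (intro sum.cong HOL.refl) auto
  also have "\<dots> = psi (gmult (antipode P) (lam h)) * y h" using fin_grp by simp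
  finally show ?thesis unfolding psi_def gmult_lam antipode_def by simp
qed

lemma chi_alpha: "chi (alpha x j) = x (phi j)"
proof -
  have "chi (alpha x j) = (\<Sum>i\<in>UNIV. if i = phi j then x i else 0)"
    unfolding alpha_def chi_esum by (intro sum.cong HOL.refl) (auto simp: chi_U phi_eq_iff)
  then show ?thesis using fin_grp by simp
qed

lemma chi_tmult: "chi (tmult (alpha x) (alpha y) k) = (\<Sum>g\<in>UNIV. \<Sum>h\<in>UNIV. if g * h = k then x (phi g) * y (phi h) else 0)"
  unfolding tmult_def chi_esum
  by (intro sum.cong HOL.refl) (simp add: chi_alpha)

lemma chi_rel:
  assumes cf: "\<And>m. P (phi m) = P m"
  shows "qut_rel (cayley P) a b \<Longrightarrow> chi a = chi b"
proof (induction rule: qut_rel.induct)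
  case (unitary1 i j)
  have "(\<Sum>k\<in>UNIV. chi (Times (Star (U k i)) (U k j))) = (\<Sum>k\<in>UNIV. if k = phi i then (if i = j then 1 else 0) else 0)"
    by (intro sum.cong HOL.refl) (auto simp: chi_U phi_inj)
  then show ?case using fin_grp by (simp add: chi_esum kron_def)
next
  case (unitary2 i j)
  have "(\<Sum>k\<in>UNIV. chi (Times (U i k) (Star (U j k)))) = (\<Sum>k\<in>UNIV. if k = phi i then (if i = j then 1 else 0) else 0)"
    by (intro sum.cong HOL.refl) (auto simp: chi_U phi_eq_iff)
  then show ?case using fin_grp by (simp add: chi_esum kron_def)
next
  case (mult x y k)
  have "chi (tmult (alpha x) (alpha y) k) = (\<Sum>g\<in>UNIV. \<Sum>h\<in>UNIV. if g * h = k then x (phi g) * y (phi h) else 0)"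
    by (rule chi_tmult)
  also have "\<dots> = (\<Sum>g\<in>UNIV. \<Sum>h\<in>UNIV. (\<lambda>a b. if a * b = phi k then x a * y b else 0) (phi g) (phi h))"
    by (intro sum.cong HOL.refl) (simp add: phi_mult[symmetric] phi_inj)
  also have "\<dots> = (\<Sum>g\<in>UNIV. \<Sum>h\<in>UNIV. (\<lambda>a b. if a * b = phi k then x a * y b else 0) (phi g) h)"
    by (rule sum.cong[OF HOL.refl], rule sum_phi)
  also have "\<dots> = (\<Sum>g\<in>UNIV. \<Sum>h\<in>UNIV. (\<lambda>a b. if a * b = phi k then x a * y b else 0) g h)"
    by (rule sum_phi[where F="\<lambda>a. \<Sum>h\<in>UNIV. (\<lambda>a b. if a * b = phi k then x a * y b else 0) a h"])
  finally show ?case by (simp add: chi_alpha gmult_def)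
next
  case (star x k)
  then show ?case by (simp add: chi_alpha tstar_def gstar_def phi_inverse)
next
  case (unit k)
  then show ?case by (auto simp: chi_alpha tunit_def lam_def phi_inj[of k 1, simplified])
next
  case (psi_pres x)
  have "(\<Sum>g\<in>UNIV. chi (Times (C (psi (lam g))) (alpha x g))) = (\<Sum>g\<in>UNIV. if g = (1::grp) then 6 * x 1 else 0)"
    by (intro sum.cong HOL.refl) (auto simp: chi_alpha psi_def lam_def)
  then show ?case using fin_grp by (simp add: tpsi_def chi_esum psi_def)
next
  case (adj x k)
  have "(\<Sum>g\<in>UNIV. chi (Times (C (cayley P (lam g) k)) (alpha x g))) = (\<Sum>g\<in>UNIV. if g = k then 6 * P k * x (phi k) else 0)"
    by (intro sum.cong HOL.refl) (auto simp: chi_alpha cayley_eq lam_def)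
  then show ?case using fin_grp by (simp add: tmap_def chi_esum chi_alpha cayley_eq cf)
qed

lemma chi_eqv:
  assumes cf: "\<And>m. P (phi m) = P m"
  shows "eqv (qut_rel (cayley P)) a b \<Longrightarrow> chi a = chi b"
  by (induction rule: eqv.induct) (auto simp: chi_rel[where P=P, OF cf] algebra_simps)

theorem proposition6p10:
  shows "\<not> (\<exists>P. central_orth_proj P \<and> qut_equals_G (cayley P))"
proof
  assume "\<exists>P. central_orth_proj P \<and> qut_equals_G (cayley P)"
  then obtain P where c: "central_orth_proj P" and q: "qut_equals_G (cayley P)" by blast
  have cf: "\<And>m. P (phi m) = P m" using c class_fun unfolding central_orth_proj_def by blast
  define i :: grp where "i = Perm.swap 1 2"
  have "Perm.apply (phi i) 1 = 1" unfolding phi_def i_def by (simp add: apply_times)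
  moreover have "Perm.apply i 1 = 2" unfolding i_def by simp
  ultimately have ne: "phi i \<noteq> i" by auto
  have "evalG (U (phi i) i) = evalG (C 0)" using ne by auto
  then have "eqv (qut_rel (cayley P)) (U (phi i) i) (C 0)" using q unfolding qut_equals_G_def by blast
  then have "chi (U (phi i) i) = chi (C 0)" by (rule chi_eqv[where P=P, OF cf])
  then show False by (simp add: chi_U)
qed

end
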